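(* Let $\tau\in F_2$ and let $[a,b]$ be $[(\tfrac12,0),(0,0)]$ or $[(\tfrac12,0),(0,\tfrac12)]$. Then $$|\theta_{a,b}(0,\tau)|\,e^{\pi\,{}^ta\operatorname{Im}\tau\,a}\ge 4-\Big(1+\Big(1+\tfrac{\sqrt6}{\sqrt{\operatorname{Im}\tau_1}}\Big)e^{-\pi\operatorname{Im}\tau_1/6}\Big)\Big(2+\Big(1+\tfrac{2}{\sqrt{\operatorname{Im}\tau_2}}\Big)e^{-\pi\operatorname{Im}\tau_2/4}\Big)-\Big(1+\Big(2+\tfrac{\sqrt2}{\sqrt{\operatorname{Im}\tau_2}}\Big)e^{-\pi\operatorname{Im}\tau_2/2}\Big)-e^{-\pi\operatorname{Im}\tau_2}-\Big(1+\Big(1+\tfrac{\sqrt2}{\sqrt{\operatorname{Im}\tau_2}}\Big)e^{-\pi\operatorname{Im}\tau_2/2}\Big)e^{-2\pi\operatorname{Im}\tau_1},$$ and this bound is positive when $\operatorname{Im}\tau_1\ge4$. The same bound, with $\tau_1$ and $\tau_2$ exchanged, holds for the characteristics $[(0,\tfrac12),(0,0)]$ and $[(0,\tfrac12),(\tfrac12,0)]$.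
   Context: $F_2$ is the standard Siegel fundamental domain for $\mathrm{Sp}_4(\mathbb{Z})$ acting on symmetric complex $2\times2$ matrices $\tau=\begin{pmatrix}\tau_1&\tau_{12}\\ \tau_{12}&\tau_2\end{pmatrix}$ with $\operatorname{Im}\tau>0$; every $\tau\in F_2$ satisfies $|\operatorname{Re}\tau_{ij}|\le 1/2$, $\operatorname{Im}\tau_2\ge\operatorname{Im}\tau_1\ge 2\operatorname{Im}\tau_{12}\ge 0$, $\operatorname{Im}\tau_1\ge\sqrt3/2$. $\theta_{a,b}(Z,\tau)=\sum_{n\in\mathbb{Z}^2}\exp\big(2i\pi(\tfrac12{}^t(n+a)\tau(n+a)+{}^t(n+a)(Z+b))\big)$. *)

theory Defs
  imports "HOL-Analysis.Analysis"
begin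

definition Im_mat :: "complex^2^2 \<Rightarrow> real^2^2" where
  "Im_mat \<tau> = (\<chi> i j. Im (\<tau> $ i $ j))"

definition Re_mat :: "complex^2^2 \<Rightarrow> real^2^2" where
  "Re_mat \<tau> = (\<chi> i j. Re (\<tau> $ i $ j))"

definition cmat_of_int :: "int^2^2 \<Rightarrow> complex^2^2" where
  "cmat_of_int M = (\<chi> i j. of_int (M $ i $ j))"

definition siegel_H2 :: "(complex^2^2) set" where
  "siegel_H2 = {\<tau>. transpose \<tau> = \<tau> \<and>
      (\<forall>x::real^2. x \<noteq> 0 \<longrightarrow> x \<bullet> (Im_mat \<tau> *v x) > 0)}"

text \<open>Block description (A B; C D) of Sp_4(Z): M^T J M = J, equivalently
  A^T C and B^T D symmetric and A^T D - C^T B = I.\<close>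
definition is_Sp4Z :: "int^2^2 \<Rightarrow> int^2^2 \<Rightarrow> int^2^2 \<Rightarrow> int^2^2 \<Rightarrow> bool" where
  "is_Sp4Z A B C D \<longleftrightarrow>
      transpose A ** C = transpose C ** A \<and>
      transpose B ** D = transpose D ** B \<and>
      transpose A ** D - transpose C ** B = mat 1"

definition F2 :: "(complex^2^2) set" where
  "F2 = {\<tau> \<in> siegel_H2.
      (\<forall>i j. \<bar>Re (\<tau> $ i $ j)\<bar> \<le> 1/2) \<and>
      Im (\<tau> $ 2 $ 2) \<ge> Im (\<tau> $ 1 $ 1) \<and>
      Im (\<tau> $ 1 $ 1) \<ge> 2 * Im (\<tau> $ 1 $ 2) \<and>
      Im (\<tau> $ 1 $ 2) \<ge> 0 \<and>
      (\<forall>A B C D. is_Sp4Z A B C D \<longrightarrow> cmod (det (cmat_of_int C ** \<tau> + cmat_of_int D)) \<ge> 1)}"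

definition theta_char :: "real^2 \<Rightarrow> real^2 \<Rightarrow> complex^2 \<Rightarrow> complex^2^2 \<Rightarrow> complex" where
  "theta_char a b Z \<tau> = infsum (\<lambda>n::int^2.
      let v = (\<chi> i. complex_of_real (of_int (n $ i) + a $ i)) in
      exp (2 * \<i> * of_real pi *
        ((1/2) * (\<Sum>i\<in>UNIV. \<Sum>j\<in>UNIV. v $ i * \<tau> $ i $ j * v $ j)
         + (\<Sum>i\<in>UNIV. v $ i * (Z $ i + complex_of_real (b $ i)))))) UNIV"

definition vec2 :: "real \<Rightarrow> real \<Rightarrow> real^2" where
  "vec2 x y = (\<chi> i. if i = 1 then x else y)"

definition theta_lower_bound :: "real \<Rightarrow> real \<Rightarrow> real" where
  "theta_lower_bound y1 y2 =
     4 - (1 + (1 + sqrt 6 / sqrt y1) * exp (- pi * y1 / 6))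
         * (2 + (1 + 2 / sqrt y2) * exp (- pi * y2 / 4))
       - (1 + (2 + sqrt 2 / sqrt y2) * exp (- pi * y2 / 2))
       - exp (- pi * y2)
       - (1 + (1 + sqrt 2 / sqrt y2) * exp (- pi * y2 / 2)) * exp (- 2 * pi * y1)"

end

theory Submission
  imports Defs
begin

lemma has_sum_int_split:
  fixes g1 g2 :: "nat \<Rightarrow> real"
  assumes "(g1 has_sum G1) UNIV" "(g2 has_sum G2) UNIV"
  shows "((\<lambda>m::int. if m \<ge> 0 then g1 (nat m) else g2 (nat (-m-1))) has_sum (G1+G2)) UNIV"
proof -
  let ?F = "(\<lambda>m::int. if m \<ge> 0 then g1 (nat m) else g2 (nat (-m-1)))"
  have 1: "(?F has_sum G1) {m. m \<ge> 0}"
    using assms(1) has_sum_reindex_bij_witness[of UNIV nat int "{m. m\<ge>0}" ?F g1 G1 G1]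
    by auto
  have 2: "(?F has_sum G2) {m. m < 0}"
    using assms(2) has_sum_reindex_bij_witness[of UNIV "\<lambda>m. nat(-m-1)" "\<lambda>k. -int k - 1" "{m. m<0}" ?F g2 G2 G2]
    by auto
  have "(?F has_sum (G1+G2)) ({m. m \<ge> 0} \<union> {m. m < 0})"
    by (rule has_sum_Un_disjoint[OF 1 2]) auto
  moreover have "{m::int. m \<ge> 0} \<union> {m. m < 0} = UNIV" by auto
  ultimately show ?thesis by simp
qed

lemma has_sum_prod_int2:
  fixes \<phi> \<psi> :: "int \<Rightarrow> real"
  assumes "(\<phi> has_sum \<Phi>) UNIV" "(\<psi> has_sum \<Psi>) UNIV" "\<And>m. \<phi> m \<ge> 0" "\<And>m. \<psi> m \<ge> 0"
  shows "((\<lambda>n::int^2. \<phi> (n$1) * \<psi> (n$2)) has_sum (\<Phi>*\<Psi>)) UNIV"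
proof -
  let ?h = "\<lambda>p::int\<times>int. \<phi> (fst p) * \<psi> (snd p)"
  have sl: "\<And>x. ((\<lambda>y. ?h (x,y)) has_sum \<phi> x * \<Psi>) UNIV"
    using assms(2) by (simp add: has_sum_cmult_right)
  have g: "((\<lambda>x. \<phi> x * \<Psi>) has_sum \<Phi> * \<Psi>) UNIV"
    using assms(1) by (simp add: has_sum_cmult_left)
  have "?h summable_on (UNIV \<times> UNIV)"
    using summable_on_SigmaI[of UNIV "\<lambda>p::int\<times>int. \<phi> (fst p) * \<psi> (snd p)" "\<lambda>_. UNIV" "\<lambda>x. \<phi> x * \<Psi>"] sl g assms(3,4)
    by (auto simp: summable_on_def)
  then have "(?h has_sum (\<Phi>*\<Psi>)) (UNIV \<times> UNIV)"
    using has_sum_SigmaI[of UNIV "\<lambda>p::int\<times>int. \<phi> (fst p) * \<psi> (snd p)" "\<lambda>_. UNIV" "\<lambda>x. \<phi> x * \<Psi>" "\<Phi>*\<Psi>"] sl g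
    by (auto simp: case_prod_unfold)
  then show ?thesis
    by (subst has_sum_reindex_bij_witness[of UNIV "\<lambda>p. (\<chi> i. if i = 1 then fst p else snd p)" "\<lambda>n. (n$1, n$2)" "UNIV \<times> UNIV" ?h])
       (auto simp: vec_eq_iff forall_2)
qed

lemma abstract_bound:
  fixes f :: "int^2 \<Rightarrow> complex" and \<phi> \<psi> :: "int \<Rightarrow> real"
  assumes hp: "(\<phi> has_sum \<Phi>) UNIV" and hq: "(\<psi> has_sum \<Psi>) UNIV"
    and p0: "\<And>m. \<phi> m \<ge> 0" and q0: "\<And>m. \<psi> m \<ge> 0"
    and fb: "\<And>n. norm (f n) \<le> \<phi> (n$1) * \<psi> (n$2)"
    and n01: "n0 \<noteq> n1" and feq: "f n0 = f n1" and fn: "norm (f n0) = 1"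
    and m0: "\<phi> (n0$1) * \<psi> (n0$2) = 1" and m1: "\<phi> (n1$1) * \<psi> (n1$2) = 1"
    and tot: "\<Phi> * \<Psi> \<le> 3"
  shows "norm (infsum f UNIV) \<ge> 1"
proof -
  define M where "M = (\<lambda>n::int^2. \<phi> (n$1) * \<psi> (n$2))"
  have hM: "(M has_sum (\<Phi>*\<Psi>)) UNIV"
    unfolding M_def by (rule has_sum_prod_int2[OF hp hq p0 q0])
  have sM: "M summable_on UNIV" using hM by (auto simp: summable_on_def)
  have absf: "(\<lambda>n. norm (f n)) summable_on UNIV"
    by (rule Infinite_Sum.abs_summable_on_comparison_test'[OF sM]) (use fb in \<open>auto simp: M_def\<close>)
  have sf: "f summable_on UNIV" by (rule abs_summable_summable[OF absf])
  define R where "R = UNIV - {n0, n1}"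
  have hf: "(f has_sum infsum f UNIV) UNIV" using sf by simp
  have hf2: "(f has_sum (f n0 + f n1)) {n0, n1}"
    using n01 has_sum_finite[of "{n0,n1}"] by simp
  have hfR: "(f has_sum (infsum f UNIV - (f n0 + f n1))) R"
    unfolding R_def by (rule has_sum_Diff[OF hf hf2]) auto
  have hM2: "(M has_sum (M n0 + M n1)) {n0, n1}"
    using n01 has_sum_finite[of "{n0,n1}"] by simp
  have hMR: "(M has_sum (\<Phi>*\<Psi> - (M n0 + M n1))) R"
    unfolding R_def by (rule has_sum_Diff[OF hM hM2]) auto
  have absfR: "(\<lambda>n. norm (f n)) summable_on R"
    by (rule Infinite_Sum.abs_summable_on_comparison_test'[OF has_sum_imp_summable[OF hMR]]) (use fb in \<open>auto simp: M_def\<close>)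
  have "norm (infsum f R) \<le> infsum (\<lambda>n. norm (f n)) R"
    by (rule norm_infsum_bound[OF absfR])
  also have "\<dots> \<le> infsum M R"
    by (rule infsum_mono[OF absfR has_sum_imp_summable[OF hMR]]) (use fb in \<open>auto simp: M_def\<close>)
  also have "\<dots> = \<Phi>*\<Psi> - (M n0 + M n1)" using hMR by (rule infsumI)
  also have "\<dots> \<le> 1" using tot m0 m1 by (simp add: M_def)
  finally have nR: "norm (infsum f R) \<le> 1" .
  have eqR: "infsum f R = infsum f UNIV - (f n0 + f n1)" using hfR by (rule infsumI)
  have "2 = norm (f n0 + f n1)" using feq fn by (simp add: norm_mult)
  also have "\<dots> = norm (infsum f UNIV - infsum f R)" using eqR by simp
  also have "\<dots> \<le> norm (infsum f UNIV) + norm (infsum f R)" by (rule norm_triangle_ineq4)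
  finally show ?thesis using nR by simp
qed

definition isplit :: "(nat \<Rightarrow> real) \<Rightarrow> (nat \<Rightarrow> real) \<Rightarrow> int \<Rightarrow> real" where
  "isplit g1 g2 m = (if m \<ge> 0 then g1 (nat m) else g2 (nat (-m-1)))"

definition geo :: "real \<Rightarrow> nat \<Rightarrow> real" where
  "geo x k = exp (- x * real k)"

lemma has_sum_isplit:
  assumes "(g1 has_sum G1) UNIV" "(g2 has_sum G2) UNIV"
  shows "(isplit g1 g2 has_sum (G1+G2)) UNIV"
  using has_sum_int_split[OF assms] unfolding isplit_def by simp

lemma geo_pow: "geo x k = exp (-x) ^ k"
  unfolding geo_def using exp_of_nat_mult[of k "-x"] by (simp add: mult.commute)

lemma sums_geo: assumes "0 < x" shows "geo x sums (1 / (1 - exp (-x)))"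
proof -
  have "norm (exp (-x)) < 1" using assms by simp
  have e: "geo x = (\<lambda>k. exp (-x) ^ k)" by (rule ext) (simp add: geo_pow)
  from geometric_sums[OF \<open>norm (exp (-x)) < 1\<close>] e show ?thesis by simp
qed

lemma has_sum_geo: assumes "0 < x" shows "(geo x has_sum (1 / (1 - exp (-x)))) UNIV"
  by (rule sums_nonneg_imp_has_sum[OF sums_geo[OF assms]]) (simp add: geo_def)

lemma has_sum_geo1: assumes "0 < x"
  shows "((\<lambda>k. geo x (k+1)) has_sum (exp (-x) / (1 - exp (-x)))) UNIV"
proof -
  have "((\<lambda>k. exp (-x) * geo x k) has_sum (exp (-x) * (1 / (1 - exp (-x))))) UNIV"
    by (rule has_sum_cmult_right[OF has_sum_geo[OF assms]])
  moreover have "\<And>k. exp (-x) * geo x k = geo x (k+1)" by (simp add: geo_pow)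
  ultimately show ?thesis by simp
qed

lemma sums_odd: assumes "0 < x"
  shows "(\<lambda>k. geo x (2*k+1)) sums (exp (-x) / (1 - exp (-(2*x))))"
proof -
  have "(\<lambda>k. exp (-x) * geo (2*x) k) sums (exp (-x) * (1 / (1 - exp (-(2*x)))))"
    by (rule sums_mult[OF sums_geo]) (use assms in simp)
  moreover have "\<And>k. exp (-x) * geo (2*x) k = geo x (2*k+1)"
    by (simp add: geo_def exp_add[symmetric] algebra_simps)
  ultimately show ?thesis by simp
qed

lemma has_sum_odd: assumes "0 < x"
  shows "((\<lambda>k. geo x (2*k+1)) has_sum (exp (-x) / (1 - exp (-(2*x))))) UNIV"
  by (rule sums_nonneg_imp_has_sum[OF sums_odd[OF assms]]) (simp add: geo_def)

lemma has_sum_odd0: assumes "0 < x"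
  shows "((\<lambda>k. if k = 0 then 1 else geo x (2*k-1)) has_sum (1 + exp (-x) / (1 - exp (-(2*x))))) UNIV"
proof -
  have "(\<lambda>k. (\<lambda>k. if k = 0 then 1 else geo x (2*k-1)) (Suc k)) sums (exp (-x) / (1 - exp (-(2*x))))"
    using sums_odd[OF assms] by simp
  then have "(\<lambda>k. if k = 0 then 1 else geo x (2*k-1)) sums (exp (-x) / (1 - exp (-(2*x))) + 1)"
    by (subst (asm) sums_Suc_iff) simp
  then show ?thesis
    by (subst add.commute, intro sums_nonneg_imp_has_sum) (auto simp: geo_def)
qed

lemma int_ineq1:
  fixes P K :: int assumes "0 \<le> P" "0 \<le> K"
  shows "0 \<le> 2*P^2 + P - 2*P*K - 2*K + 2*K^2"
proof (cases "K \<le> 1")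
  case True
  then have "K = 0 \<or> K = 1" using assms by auto
  moreover have "0 \<le> P*(P-1)" using assms by (cases "P = 0") (simp_all add: mult_nonneg_nonneg)
  ultimately show ?thesis using assms by (auto simp: power2_eq_square algebra_simps)
next
  case False
  have a: "0 \<le> (P-K)^2" by simp
  have "0 \<le> K*(K-2)" using False by auto
  then have b: "0 \<le> K^2 - 2*K" by (simp add: power2_eq_square algebra_simps)
  have c: "0 \<le> P^2" by simp
  have "2*P^2 + P - 2*P*K - 2*K + 2*K^2 = (P-K)^2 + (K^2 - 2*K) + P^2 + P"
    by (simp add: power2_eq_square algebra_simps)
  then show ?thesis using a b c assms by linarith
qed

lemma int_ineq2:
  fixes J P :: int assumes "1 \<le> J" "0 \<le> P"
  shows "0 \<le> 2*J^2 - 2*J*P - 3*J + 1 + 2*P^2"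
proof (cases "J \<le> 2")
  case True
  then have "J = 1 \<or> J = 2" using assms by auto
  moreover have "0 \<le> P*(P-1)" using assms by (cases "P = 0") (simp_all add: mult_nonneg_nonneg)
  moreover have "0 \<le> (P-1)^2" by simp
  ultimately show ?thesis using assms by (auto simp: power2_eq_square algebra_simps)
next
  case False
  have a: "0 \<le> (J-P)^2" by simp
  have "0 \<le> J*(J-3)" using False by auto
  then have b: "0 \<le> J^2 - 3*J" by (simp add: power2_eq_square algebra_simps)
  have c: "0 \<le> P^2" by simp
  have "2*J^2 - 2*J*P - 3*J + 1 + 2*P^2 = (J-P)^2 + (J^2 - 3*J) + P^2 + 1"
    by (simp add: power2_eq_square algebra_simps)
  then show ?thesis using a b c by linarith
qed

lemma expo1:
  fixes m n :: int and y1 y2 c :: real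
  assumes "0 \<le> c" "2*c \<le> y1" "y1 \<le> y2"
  defines "P \<equiv> (if m \<ge> 0 then m else -m-1)"
  shows "y1* (of_int m + 1/2)^2 + 2*c* (of_int m + 1/2)* of_int n + y2* (of_int n)^2 - y1/4
         \<ge> y1/2 * (of_int P + of_int \<bar>n\<bar>)"
proof -
  have P0: "0 \<le> P" unfolding P_def by auto
  have u: "\<bar>of_int m + 1/2\<bar> = (of_int P + 1/2 :: real)" unfolding P_def by auto
  have sq1: "(of_int m + 1/2)^2 = (of_int P + 1/2 :: real)^2" by (metis u power2_abs)
  have sq2: "(of_int n)^2 = (of_int \<bar>n\<bar> :: real)^2" by simp
  have y10: "0 \<le> y1" using assms by linarith
  have "\<bar>2*c* (of_int m + 1/2)* of_int n\<bar> = 2*c* (of_int P + 1/2)* of_int \<bar>n\<bar>"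
    using assms(1) u by (simp add: abs_mult)
  also have "\<dots> \<le> y1* (of_int P + 1/2)* of_int \<bar>n\<bar>"
    using assms(2) P0 by (intro mult_right_mono) auto
  finally have cross: "2*c* (of_int m + 1/2)* of_int n \<ge> - (y1* (of_int P + 1/2)* of_int \<bar>n\<bar>)"
    by linarith
  have "0 \<le> real_of_int (2*P^2 + P - 2*P*\<bar>n\<bar> - 2*\<bar>n\<bar> + 2*\<bar>n\<bar>^2)"
    using int_ineq1[OF P0, of "\<bar>n\<bar>"] by (simp only: of_int_0_le_iff)
  then have i1: "0 \<le> y1 * of_int (2*P^2 + P - 2*P*\<bar>n\<bar> - 2*\<bar>n\<bar> + 2*\<bar>n\<bar>^2)"
    using y10 by (rule mult_nonneg_nonneg[rotated])
  have i2: "y1 * (of_int \<bar>n\<bar>)^2 \<le> y2 * (of_int \<bar>n\<bar>)^2"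
    using assms(3) by (intro mult_right_mono) auto
  show ?thesis using cross i1 i2 sq1 sq2
    by (simp add: power2_eq_square algebra_simps) 
qed

lemma expo2:
  fixes m n :: int and y1 y2 c :: real
  assumes "0 \<le> c" "2*c \<le> y1" "y1 \<le> y2"
  defines "P \<equiv> (if n \<ge> 0 then n else -n-1)"
  defines "J \<equiv> (if m = 0 then 0 else 2*\<bar>m\<bar> - 1)"
  shows "y1* (of_int m)^2 + 2*c* (of_int m)* (of_int n + 1/2) + y2* (of_int n + 1/2)^2 - y2/4
         \<ge> y1/2 * of_int J + y2 * of_int P"
proof -
  have P0: "0 \<le> P" unfolding P_def by auto
  have u: "\<bar>of_int n + 1/2\<bar> = (of_int P + 1/2 :: real)" unfolding P_def by auto
  have sq1: "(of_int n + 1/2)^2 = (of_int P + 1/2 :: real)^2" by (metis u power2_abs)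
  have sq2: "(of_int m)^2 = (of_int \<bar>m\<bar> :: real)^2" by simp
  have y10: "0 \<le> y1" using assms by linarith
  have "\<bar>2*c* (of_int m)* (of_int n + 1/2)\<bar> = 2*c* (of_int \<bar>m\<bar>)* (of_int P + 1/2)"
    using assms(1) u by (simp add: abs_mult)
  also have "\<dots> \<le> y1* (of_int \<bar>m\<bar>)* (of_int P + 1/2)"
    using assms(2) P0 by (intro mult_right_mono) auto
  finally have cross: "2*c* (of_int m)* (of_int n + 1/2) \<ge> - (y1* (of_int \<bar>m\<bar>)* (of_int P + 1/2))"
    by linarith
  have i2: "y1 * (of_int P)^2 \<le> y2 * (of_int P)^2"
    using assms(3) by (intro mult_right_mono) auto
  show ?thesis
  proof (cases "m = 0")
    case True
    have "0 \<le> y2 * (of_int P)^2" using y10 assms(3) by simp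
    then show ?thesis using True sq1 unfolding J_def by (simp add: power2_eq_square algebra_simps)
  next
    case False
    then have J1: "1 \<le> \<bar>m\<bar>" by auto
    have "0 \<le> real_of_int (2*\<bar>m\<bar>^2 - 2*\<bar>m\<bar>*P - 3*\<bar>m\<bar> + 1 + 2*P^2)"
      using int_ineq2[OF J1 P0] by (simp only: of_int_0_le_iff)
    then have i1: "0 \<le> y1 * of_int (2*\<bar>m\<bar>^2 - 2*\<bar>m\<bar>*P - 3*\<bar>m\<bar> + 1 + 2*P^2)"
      using y10 by (rule mult_nonneg_nonneg[rotated])
    show ?thesis using False cross i1 i2 sq1 sq2 unfolding J_def
      by (simp add: power2_eq_square algebra_simps) 
  qed
qed

lemma norm_term:
  fixes \<tau> :: "complex^2^2" and a b :: "real^2" and n :: "int^2"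
  assumes sym: "\<tau>$2$1 = \<tau>$1$2"
  shows "norm (let v = (\<chi> i. complex_of_real (of_int (n $ i) + a $ i)) in
      exp (2 * \<i> * of_real pi *
        ((1/2) * (\<Sum>i\<in>UNIV. \<Sum>j\<in>UNIV. v $ i * \<tau> $ i $ j * v $ j)
         + (\<Sum>i\<in>UNIV. v $ i * ((0::complex^2) $ i + complex_of_real (b $ i))))))
    = exp (- pi * (Im (\<tau>$1$1) * (of_int (n$1) + a$1)^2 + 2 * Im (\<tau>$1$2) * (of_int (n$1) + a$1) * (of_int (n$2) + a$2)
          + Im (\<tau>$2$2) * (of_int (n$2) + a$2)^2))"
  using sym by (simp add: Let_def sum_2 norm_exp_eq_Re algebra_simps power2_eq_square)

lemma e_lo: "2718/1000 \<le> exp (1::real)"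
  using e_approx_32 by (simp add: abs_if split: if_splits)

lemma e_hi: "exp (1::real) \<le> 272/100"
  using e_less_272 by simp

lemma expneg_nat: "exp (- real k) \<le> (1000/2718::real)^k"
proof -
  have "exp (- real k) = inverse (exp 1 ^ k)"
    using exp_of_nat_mult[of k "1::real"] by (simp add: exp_minus)
  also have "\<dots> = (inverse (exp 1))^k" by (simp add: power_inverse)
  also have "\<dots> \<le> (1000/2718)^k"
    by (rule power_mono) (use e_lo in \<open>auto simp: field_simps\<close>)
  finally show ?thesis .
qed

lemma expneg_mono: "(a::real) \<le> b \<Longrightarrow> exp (-b) \<le> exp (-a)" by simp

lemma exp_m1_ge: "exp (-1::real) \<ge> 100/272"
proof -
  have "100/272 * exp 1 \<le> (1::real)" using e_hi by simp
  then have "100/272 * exp 1 * exp (-1) \<le> 1 * exp (-1::real)"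
    by (rule mult_right_mono) simp
  then show ?thesis by (simp add: mult.assoc exp_add[symmetric])
qed

lemma pi_lo: "3141/1000 \<le> pi"
proof -
  have "3141/1000 \<le> (3.141592653588::real)" by simp
  then show ?thesis using pi_approx(1) by linarith
qed

lemma rho1_bound: assumes "3/2 \<le> y1" shows "exp (- (pi*y1/2)) \<le> 1/8"
proof -
  have "3 * (3/2) \<le> pi * y1" by (rule mult_mono) (use pi_gt3 assms in auto)
  then have "9/4 \<le> pi*y1/2" by simp
  then have "exp (- (pi*y1/2)) \<le> exp (- (2 + 1/4))" by simp
  also have "\<dots> = exp (- real 2) * exp (-(1/4))" by (simp add: exp_add[symmetric])
  also have "\<dots> \<le> (1000/2718)^2 * (4/5)"
  proof (rule mult_mono)
    show "exp (- real 2) \<le> (1000/2718)^2" by (rule expneg_nat)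
    have "1 + 1/4 \<le> exp (1/4::real)" by (rule exp_ge_add_one_self)
    then show "exp (-(1/4::real)) \<le> 4/5" by (simp add: exp_minus field_simps)
  qed auto
  also have "\<dots> \<le> 1/8" by (simp add: eval_nat_numeral)
  finally show ?thesis .
qed

lemma s_bound: assumes "1 \<le> y1" shows "exp (- (pi*y1/2)) \<le> 213/1000"
proof -
  have "3141/1000 * 1 \<le> pi * y1" by (rule mult_mono) (use pi_lo assms in auto)
  then have "157/100 \<le> pi*y1/2" by simp
  then have "exp (- (pi*y1/2)) \<le> exp (- (1 + 57/100))" by simp
  also have "\<dots> = exp (- real 1) * exp (-(57/100))" by (simp add: exp_add[symmetric])
  also have "\<dots> \<le> (1000/2718) * (1/(1 + 57/100 + (57/100)^2/2))"
  proof (rule mult_mono)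
    show "exp (- real 1) \<le> (1000/2718)" using expneg_nat[of 1] by simp
    have "1 + 57/100 + (57/100)^2/2 \<le> exp (57/100::real)" by (rule exp_lower_Taylor_quadratic) simp
    then show "exp (-(57/100::real)) \<le> (1/(1 + 57/100 + (57/100)^2/2))"
      by (simp add: exp_minus field_simps)
  qed auto
  also have "\<dots> \<le> 213/1000" by (simp add: eval_nat_numeral)
  finally show ?thesis .
qed

lemma rho2_bound: assumes "3/2 \<le> y2" shows "exp (- (pi*y2)) \<le> 1/50"
proof -
  have "3 * (3/2) \<le> pi * y2" by (rule mult_mono) (use pi_gt3 assms in auto)
  then have "4 \<le> pi*y2" by simp
  then have "exp (- (pi*y2)) \<le> exp (- real 4)" by simp
  also have "\<dots> \<le> (1000/2718)^4" by (rule expneg_nat)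
  also have "\<dots> \<le> 1/50" by (simp add: eval_nat_numeral)
  finally show ?thesis .
qed

lemma tlb_le1:
  assumes "0 \<le> y1" "0 \<le> y2"
  shows "theta_lower_bound y1 y2 \<le> 1"
proof -
  define X where "X = (1 + sqrt 6 / sqrt y1) * exp (- pi * y1 / 6)"
  define Y where "Y = (1 + 2 / sqrt y2) * exp (- pi * y2 / 4)"
  define C where "C = (2 + sqrt 2 / sqrt y2) * exp (- pi * y2 / 2)"
  define E where "E = (1 + (1 + sqrt 2 / sqrt y2) * exp (- pi * y2 / 2)) * exp (- 2 * pi * y1)"
  have X0: "0 \<le> X" unfolding X_def using assms by (intro mult_nonneg_nonneg add_nonneg_nonneg) auto
  have Y0: "0 \<le> Y" unfolding Y_def using assms by (intro mult_nonneg_nonneg add_nonneg_nonneg) auto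
  have C0: "0 \<le> C" unfolding C_def using assms by (intro mult_nonneg_nonneg add_nonneg_nonneg) auto
  have E0: "0 \<le> E" unfolding E_def using assms by (intro mult_nonneg_nonneg add_nonneg_nonneg) auto
  have "1 * 2 \<le> (1 + X) * (2 + Y)" by (rule mult_mono) (use X0 Y0 in auto)
  moreover have "theta_lower_bound y1 y2 = 4 - (1 + X) * (2 + Y) - (1 + C) - exp (- pi * y2) - E"
    unfolding theta_lower_bound_def X_def Y_def C_def E_def by simp
  moreover have "0 \<le> exp (- pi * y2)" by simp
  ultimately show ?thesis using C0 E0 by linarith
qed

lemma tlb_le0_a:
  assumes "0 < y1" "y1 \<le> 3/2" "0 \<le> y2"
  shows "theta_lower_bound y1 y2 \<le> 0"
proof -
  define X where "X = (1 + sqrt 6 / sqrt y1) * exp (- pi * y1 / 6)"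
  define Y where "Y = (1 + 2 / sqrt y2) * exp (- pi * y2 / 4)"
  define C where "C = (2 + sqrt 2 / sqrt y2) * exp (- pi * y2 / 2)"
  define E where "E = (1 + (1 + sqrt 2 / sqrt y2) * exp (- pi * y2 / 2)) * exp (- 2 * pi * y1)"
  have Y0: "0 \<le> Y" unfolding Y_def using assms by (intro mult_nonneg_nonneg add_nonneg_nonneg) auto
  have C0: "0 \<le> C" unfolding C_def using assms by (intro mult_nonneg_nonneg add_nonneg_nonneg) auto
  have E0: "0 \<le> E" unfolding E_def using assms by (intro mult_nonneg_nonneg add_nonneg_nonneg) auto
  have sq: "2 * sqrt y1 \<le> sqrt 6"
  proof -
    have "2 * sqrt y1 = sqrt (4 * y1)" by (simp add: real_sqrt_mult)
    also have "\<dots> \<le> sqrt 6" using assms by simp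
    finally show ?thesis .
  qed
  have r: "2 \<le> sqrt 6 / sqrt y1" using sq assms by (simp add: le_divide_eq)
  have "pi * y1 \<le> 4 * (3/2)" by (rule mult_mono) (use pi_less_4 assms in auto)
  then have "pi * y1 / 6 \<le> 1" by simp
  then have "exp (-1) \<le> exp (- pi * y1 / 6)" by simp
  then have e: "100/272 \<le> exp (- pi * y1 / 6)" using exp_m1_ge by linarith
  have "(1 + 2) * (100/272) \<le> X" unfolding X_def by (rule mult_mono) (use r e in auto)
  then have X1: "1 \<le> X" by simp
  have "(1 + X) * 2 \<le> (1 + X) * (2 + Y)" by (rule mult_left_mono) (use X1 Y0 in auto)
  moreover have "theta_lower_bound y1 y2 = 4 - (1 + X) * (2 + Y) - (1 + C) - exp (- pi * y2) - E"
    unfolding theta_lower_bound_def X_def Y_def C_def E_def by simp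
  moreover have "0 \<le> exp (- pi * y2)" by simp
  moreover have "(1 + X) * 2 = 2 + 2 * X" by simp
  ultimately show ?thesis using C0 E0 X1 by linarith
qed

lemma tlb_le0_b:
  assumes "0 < z" "z \<le> 1" "0 \<le> w"
  shows "theta_lower_bound w z \<le> 0"
proof -
  define X where "X = (1 + sqrt 6 / sqrt w) * exp (- pi * w / 6)"
  define Y where "Y = (1 + 2 / sqrt z) * exp (- pi * z / 4)"
  define C where "C = (2 + sqrt 2 / sqrt z) * exp (- pi * z / 2)"
  define E where "E = (1 + (1 + sqrt 2 / sqrt z) * exp (- pi * z / 2)) * exp (- 2 * pi * w)"
  have X0: "0 \<le> X" unfolding X_def using assms by (intro mult_nonneg_nonneg add_nonneg_nonneg) auto
  have C0: "0 \<le> C" unfolding C_def using assms by (intro mult_nonneg_nonneg add_nonneg_nonneg) auto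
  have E0: "0 \<le> E" unfolding E_def using assms by (intro mult_nonneg_nonneg add_nonneg_nonneg) auto
  have "sqrt z \<le> 1" using assms by simp
  then have r: "2 \<le> 2 / sqrt z" using assms by (simp add: le_divide_eq)
  have "pi * z \<le> 4 * 1" by (rule mult_mono) (use pi_less_4 assms in auto)
  then have "pi * z / 4 \<le> 1" by simp
  then have "exp (-1) \<le> exp (- pi * z / 4)" by simp
  then have e: "100/272 \<le> exp (- pi * z / 4)" using exp_m1_ge by linarith
  have "(1 + 2) * (100/272) \<le> Y" unfolding Y_def by (rule mult_mono) (use r e in auto)
  then have Y1: "1 \<le> Y" by simp
  have "1 * 3 \<le> (1 + X) * (2 + Y)" by (rule mult_mono) (use X0 Y1 in auto)
  moreover have "theta_lower_bound w z = 4 - (1 + X) * (2 + Y) - (1 + C) - exp (- pi * z) - E"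
    unfolding theta_lower_bound_def X_def Y_def C_def E_def by simp
  moreover have "0 \<le> exp (- pi * z)" by simp
  ultimately show ?thesis using C0 E0 by linarith
qed

lemma tlb_pos:
  assumes "4 \<le> y1" "y1 \<le> y2"
  shows "theta_lower_bound y1 y2 > 0"
proof -
  define X where "X = (1 + sqrt 6 / sqrt y1) * exp (- pi * y1 / 6)"
  define Y where "Y = (1 + 2 / sqrt y2) * exp (- pi * y2 / 4)"
  define C where "C = (2 + sqrt 2 / sqrt y2) * exp (- pi * y2 / 2)"
  define E where "E = (1 + (1 + sqrt 2 / sqrt y2) * exp (- pi * y2 / 2)) * exp (- 2 * pi * y1)"
  have y2: "4 \<le> y2" using assms by linarith
  have s1: "2 \<le> sqrt y1" using real_sqrt_le_mono[OF assms(1)] by simp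
  have s2: "2 \<le> sqrt y2" using real_sqrt_le_mono[OF y2] by simp
  have s6: "sqrt 6 \<le> 5/2" by (rule real_le_lsqrt) (auto simp: power2_eq_square)
  have s2': "sqrt 2 \<le> 2" by (rule real_le_lsqrt) auto
  have q1: "sqrt 6 / sqrt y1 \<le> 5/4"
  proof -
    have "sqrt 6 / sqrt y1 \<le> (5/2) / 2" by (rule frac_le) (use s6 s1 in auto)
    then show ?thesis by simp
  qed
  have q2: "2 / sqrt y2 \<le> 1" using s2 y2 by (simp add: divide_le_eq)
  have q3: "sqrt 2 / sqrt y2 \<le> 1" using s2 s2' y2 by (simp add: divide_le_eq)
  have ppos: "3 * 4 \<le> pi * y1" by (rule mult_mono) (use pi_gt3 assms in auto)
  have ppos2: "3 * 4 \<le> pi * y2" by (rule mult_mono) (use pi_gt3 y2 in auto)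
  have e1: "exp (- pi * y1 / 6) \<le> (1000/2718)^2"
  proof -
    have "exp (- pi * y1 / 6) \<le> exp (- real 2)" using ppos by simp
    also have "\<dots> \<le> (1000/2718)^2" by (rule expneg_nat)
    finally show ?thesis .
  qed
  have e2: "exp (- pi * y2 / 4) \<le> (1000/2718)^3"
  proof -
    have "exp (- pi * y2 / 4) \<le> exp (- real 3)" using ppos2 by simp
    also have "\<dots> \<le> (1000/2718)^3" by (rule expneg_nat)
    finally show ?thesis .
  qed
  have e3: "exp (- pi * y2 / 2) \<le> (1000/2718)^6"
  proof -
    have "exp (- pi * y2 / 2) \<le> exp (- real 6)" using ppos2 by simp
    also have "\<dots> \<le> (1000/2718)^6" by (rule expneg_nat)
    finally show ?thesis .
  qed
  have e4: "exp (- pi * y2) \<le> 1/100"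
  proof -
    have "exp (- pi * y2) \<le> exp (- real 12)" using ppos2 by simp
    also have "\<dots> \<le> (1000/2718)^12" by (rule expneg_nat)
    also have "\<dots> \<le> 1/100" by (simp add: eval_nat_numeral)
    finally show ?thesis .
  qed
  have e5: "exp (- 2 * pi * y1) \<le> 1/300"
  proof -
    have "exp (- 2 * pi * y1) \<le> exp (- real 24)" using ppos by simp
    also have "\<dots> \<le> (1000/2718)^24" by (rule expneg_nat)
    also have "\<dots> \<le> 1/300" by (simp add: eval_nat_numeral)
    finally show ?thesis .
  qed
  have X0: "0 \<le> X" unfolding X_def using assms by (intro mult_nonneg_nonneg add_nonneg_nonneg) auto
  have Y0: "0 \<le> Y" unfolding Y_def using y2 by (intro mult_nonneg_nonneg add_nonneg_nonneg) auto
  have Xb: "X \<le> (1 + 5/4) * (1000/2718)^2" unfolding X_def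
    by (rule mult_mono) (use q1 e1 in auto)
  have Yb: "Y \<le> (1 + 1) * (1000/2718)^3" unfolding Y_def
    by (rule mult_mono) (use q2 e2 in auto)
  have Cb: "C \<le> (2 + 1) * (1000/2718)^6" unfolding C_def
    by (rule mult_mono) (use q3 e3 in auto)
  have Eb': "(1 + sqrt 2 / sqrt y2) * exp (- pi * y2 / 2) \<le> (1 + 1) * (1000/2718)^6"
    by (rule mult_mono) (use q3 e3 in auto)
  have Eb: "E \<le> (1 + (1 + 1) * (1000/2718)^6) * (1/300)" unfolding E_def
    by (rule mult_mono) (use Eb' e5 in auto)
  have Xn: "X \<le> 61/200" using Xb by (simp add: eval_nat_numeral)
  have Yn: "Y \<le> 1/10" using Yb by (simp add: eval_nat_numeral)
  have Cn: "C \<le> 1/100" using Cb by (simp add: eval_nat_numeral)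
  have En: "E \<le> 1/100" using Eb by (simp add: eval_nat_numeral)
  have "(1 + X) * (2 + Y) \<le> (1 + 61/200) * (2 + 1/10)"
    by (rule mult_mono) (use Xn Yn X0 Y0 in auto)
  moreover have "theta_lower_bound y1 y2 = 4 - (1 + X) * (2 + Y) - (1 + C) - exp (- pi * y2) - E"
    unfolding theta_lower_bound_def X_def Y_def C_def E_def by simp
  ultimately show ?thesis using Cn En e4 by simp
qed

definition tterm :: "real^2 \<Rightarrow> real^2 \<Rightarrow> complex^2^2 \<Rightarrow> int^2 \<Rightarrow> complex" where
  "tterm a b \<tau> n = (let v = (\<chi> i. complex_of_real (of_int (n $ i) + a $ i)) in
      exp (2 * \<i> * of_real pi *
        ((1/2) * (\<Sum>i\<in>UNIV. \<Sum>j\<in>UNIV. v $ i * \<tau> $ i $ j * v $ j)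
         + (\<Sum>i\<in>UNIV. v $ i * ((0::complex^2) $ i + complex_of_real (b $ i))))))"

lemma theta_eq: "theta_char a b 0 \<tau> = infsum (tterm a b \<tau>) UNIV"
  unfolding theta_char_def tterm_def by simp

lemma vec2_1[simp]: "vec2 x y $ 1 = x" by (simp add: vec2_def)
lemma vec2_2[simp]: "vec2 x y $ 2 = y" by (simp add: vec2_def)

lemma aYa1: "vec2 (1/2) 0 \<bullet> (Im_mat \<tau> *v vec2 (1/2) 0) = Im (\<tau>$1$1) / 4"
  by (simp add: inner_vec_def sum_2 matrix_vector_mult_def Im_mat_def)
lemma aYa2: "vec2 0 (1/2) \<bullet> (Im_mat \<tau> *v vec2 0 (1/2)) = Im (\<tau>$2$2) / 4"
  by (simp add: inner_vec_def sum_2 matrix_vector_mult_def Im_mat_def)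

lemma phi1_eq: "isplit (geo x) (geo x) m = exp (-x * of_int (if m \<ge> 0 then m else -m-1))"
  by (simp add: isplit_def geo_def)
lemma psi1_eq: "isplit (geo x) (\<lambda>k. geo x (k+1)) n = exp (-x * of_int \<bar>n\<bar>)"
  by (simp add: isplit_def geo_def)
lemma phi2_eq: "isplit (\<lambda>k. if k = 0 then 1 else geo x (2*k-1)) (\<lambda>k. geo x (2*k+1)) m
    = exp (-x * of_int (if m = 0 then 0 else 2*\<bar>m\<bar>-1))"
proof -
  have "m > 0 \<Longrightarrow> real (2 * nat m - 1) = 2 * real_of_int m - 1" by (simp add: of_nat_diff)
  then show ?thesis by (auto simp: isplit_def geo_def)
qed

lemma case1:
  fixes \<tau> :: "complex^2^2" and b :: "real^2"
  assumes sym: "\<tau>$2$1 = \<tau>$1$2" and c0: "0 \<le> Im (\<tau>$1$2)" and c1: "2 * Im (\<tau>$1$2) \<le> Im (\<tau>$1$1)"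
    and y12: "Im (\<tau>$1$1) \<le> Im (\<tau>$2$2)" and y1: "3/2 \<le> Im (\<tau>$1$1)" and b1: "b$1 = 0"
  shows "1 \<le> cmod (theta_char (vec2 (1/2) 0) b 0 \<tau>) * exp (pi * (vec2 (1/2) 0 \<bullet> (Im_mat \<tau> *v vec2 (1/2) 0)))"
proof -
  define a where "a = vec2 (1/2) 0"
  define y where "y = Im (\<tau>$1$1)"
  define x where "x = pi * y / 2"
  define \<rho> where "\<rho> = exp (-x)"
  define f where "f = (\<lambda>n. tterm a b \<tau> n * complex_of_real (exp (pi * y / 4)))"
  define \<phi> where "\<phi> = isplit (geo x) (geo x)"
  define \<psi> where "\<psi> = isplit (geo x) (\<lambda>k. geo x (k+1))"
  have x0: "0 < x" unfolding x_def y_def using y1 by simp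
  have lhs: "cmod (theta_char a b 0 \<tau>) * exp (pi * (a \<bullet> (Im_mat \<tau> *v a))) = norm (infsum f UNIV)"
    unfolding f_def a_def theta_eq aYa1 y_def infsum_cmult_left' by (simp add: norm_mult)
  have hp: "(\<phi> has_sum (1 / (1 - \<rho>) + 1 / (1 - \<rho>))) UNIV"
    unfolding \<phi>_def \<rho>_def by (intro has_sum_isplit has_sum_geo x0)
  have hq: "(\<psi> has_sum (1 / (1 - \<rho>) + \<rho> / (1 - \<rho>))) UNIV"
    unfolding \<psi>_def \<rho>_def by (intro has_sum_isplit has_sum_geo has_sum_geo1 x0)
  have p0: "\<And>m. \<phi> m \<ge> 0" unfolding \<phi>_def by (simp add: phi1_eq)
  have q0: "\<And>m. \<psi> m \<ge> 0" unfolding \<psi>_def psi1_eq by simp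
  have nf: "norm (f n) = exp (- pi * (y * (of_int (n$1) + 1/2)^2 + 2 * Im (\<tau>$1$2) * (of_int (n$1) + 1/2) * of_int (n$2)
          + Im (\<tau>$2$2) * (of_int (n$2))^2)) * exp (pi * y / 4)" for n
    unfolding f_def tterm_def norm_mult using norm_term[OF sym, of n a b] by (simp add: a_def y_def)
  have fb: "norm (f n) \<le> \<phi> (n$1) * \<psi> (n$2)" for n
  proof -
    define m k where "m = n$1" and "k = n$2"
    have ex: "y*(of_int m + 1/2)^2 + 2*Im (\<tau>$1$2)*(of_int m + 1/2)* of_int k + Im (\<tau>$2$2)*(of_int k)^2 - y/4
         \<ge> y/2 * (of_int (if m \<ge> 0 then m else -m-1) + of_int \<bar>k\<bar>)"
      using expo1[OF c0 c1[folded y_def] y12[folded y_def]] by simp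
    have "norm (f n) = exp (- (pi * (y*(of_int m + 1/2)^2 + 2*Im (\<tau>$1$2)*(of_int m + 1/2)* of_int k + Im (\<tau>$2$2)*(of_int k)^2 - y/4)))"
      unfolding nf m_def k_def by (simp add: exp_add[symmetric] algebra_simps)
    also have "\<dots> \<le> exp (- (pi * (y/2 * (of_int (if m \<ge> 0 then m else -m-1) + of_int \<bar>k\<bar>))))"
      using mult_left_mono[OF ex, of pi] by simp
    also have "\<dots> = \<phi> m * \<psi> k"
      unfolding \<phi>_def \<psi>_def phi1_eq psi1_eq x_def by (simp add: exp_add[symmetric] algebra_simps)
    finally show ?thesis by (simp add: m_def k_def)
  qed
  define n0 :: "int^2" where "n0 = 0"
  define n1 :: "int^2" where "n1 = (\<chi> i. if i = 1 then -1 else 0)"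
  have n01: "n0 \<noteq> n1" unfolding n0_def n1_def by (auto simp: vec_eq_iff)
  have feq: "f n0 = f n1" unfolding f_def tterm_def n0_def n1_def a_def
    using b1 by (simp add: Let_def sum_2 algebra_simps)
  have fn: "norm (f n0) = 1" unfolding nf n0_def by (simp add: exp_add[symmetric] power2_eq_square)
  have m0: "\<phi> (n0$1) * \<psi> (n0$2) = 1" unfolding \<phi>_def \<psi>_def phi1_eq psi1_eq n0_def by simp
  have m1: "\<phi> (n1$1) * \<psi> (n1$2) = 1" unfolding \<phi>_def \<psi>_def phi1_eq psi1_eq n1_def by simp
  have r0: "0 < \<rho>" unfolding \<rho>_def by simp
  have r1: "\<rho> \<le> 1/8" unfolding \<rho>_def x_def y_def using rho1_bound[OF y1] by simp
  have tot: "(1 / (1 - \<rho>) + 1 / (1 - \<rho>)) * (1 / (1 - \<rho>) + \<rho> / (1 - \<rho>)) \<le> 3"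
  proof -
    have "2 * (1 + \<rho>) \<le> 3 * (1 - \<rho>)^2"
    proof -
      have h: "0 \<le> \<rho> * \<rho>" using r0 by simp
      have "2 * (1 + \<rho>) = 2 + 2 * \<rho>" by simp
      also have "\<dots> \<le> 3 - 6 * \<rho> + 3 * (\<rho> * \<rho>)" using r1 h by linarith
      also have "\<dots> = 3 * (1 - \<rho>)^2" by (simp add: power2_eq_square algebra_simps)
      finally show ?thesis .
    qed
    moreover have "(1 / (1 - \<rho>) + 1 / (1 - \<rho>)) * (1 / (1 - \<rho>) + \<rho> / (1 - \<rho>)) = 2 * (1 + \<rho>) / (1 - \<rho>)^2"
      using r1 by (simp add: field_simps power2_eq_square)
    moreover have "0 < (1 - \<rho>)^2" using r1 by simp
    ultimately show ?thesis by (simp add: divide_le_eq)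
  qed
  have "1 \<le> norm (infsum f UNIV)"
    by (rule abstract_bound[OF hp hq p0 q0 fb n01 feq fn m0 m1 tot])
  then show ?thesis using lhs unfolding a_def by simp
qed

lemma case2:
  fixes \<tau> :: "complex^2^2" and b :: "real^2"
  assumes sym: "\<tau>$2$1 = \<tau>$1$2" and c0: "0 \<le> Im (\<tau>$1$2)" and c1: "2 * Im (\<tau>$1$2) \<le> Im (\<tau>$1$1)"
    and y12: "Im (\<tau>$1$1) \<le> Im (\<tau>$2$2)" and y1: "1 \<le> Im (\<tau>$1$1)" and y2: "3/2 \<le> Im (\<tau>$2$2)"
    and b2: "b$2 = 0"
  shows "1 \<le> cmod (theta_char (vec2 0 (1/2)) b 0 \<tau>) * exp (pi * (vec2 0 (1/2) \<bullet> (Im_mat \<tau> *v vec2 0 (1/2))))"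
proof -
  define a where "a = vec2 0 (1/2)"
  define y where "y = Im (\<tau>$1$1)"
  define w where "w = Im (\<tau>$2$2)"
  define x where "x = pi * y / 2"
  define z where "z = pi * w"
  define s where "s = exp (-x)"
  define r where "r = exp (-z)"
  define f where "f = (\<lambda>n. tterm a b \<tau> n * complex_of_real (exp (pi * w / 4)))"
  define \<phi> where "\<phi> = isplit (\<lambda>k. if k = 0 then 1 else geo x (2*k-1)) (\<lambda>k. geo x (2*k+1))"
  define \<psi> where "\<psi> = isplit (geo z) (geo z)"
  have x0: "0 < x" unfolding x_def y_def using y1 by simp
  have z0: "0 < z" unfolding z_def w_def using y2 by simp
  have lhs: "cmod (theta_char a b 0 \<tau>) * exp (pi * (a \<bullet> (Im_mat \<tau> *v a))) = norm (infsum f UNIV)"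
    unfolding f_def a_def theta_eq aYa2 w_def infsum_cmult_left' by (simp add: norm_mult)
  have hp: "(\<phi> has_sum ((1 + s / (1 - exp (-(2*x)))) + s / (1 - exp (-(2*x))))) UNIV"
    unfolding \<phi>_def s_def by (intro has_sum_isplit has_sum_odd0 has_sum_odd x0)
  have hq: "(\<psi> has_sum (1 / (1 - r) + 1 / (1 - r))) UNIV"
    unfolding \<psi>_def r_def by (intro has_sum_isplit has_sum_geo z0)
  have p0: "\<And>m. \<phi> m \<ge> 0" unfolding \<phi>_def phi2_eq by simp
  have q0: "\<And>m. \<psi> m \<ge> 0" unfolding \<psi>_def phi1_eq by simp
  have nf: "norm (f n) = exp (- pi * (y * (of_int (n$1))^2 + 2 * Im (\<tau>$1$2) * (of_int (n$1)) * (of_int (n$2) + 1/2)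
          + w * (of_int (n$2) + 1/2)^2)) * exp (pi * w / 4)" for n
    unfolding f_def tterm_def norm_mult using norm_term[OF sym, of n a b] by (simp add: a_def y_def w_def)
  have fb: "norm (f n) \<le> \<phi> (n$1) * \<psi> (n$2)" for n
  proof -
    define m k where "m = n$1" and "k = n$2"
    have ex: "y*(of_int m)^2 + 2*Im (\<tau>$1$2)*(of_int m)*(of_int k + 1/2) + w*(of_int k + 1/2)^2 - w/4
         \<ge> y/2 * of_int (if m = 0 then 0 else 2*\<bar>m\<bar> - 1) + w * of_int (if k \<ge> 0 then k else -k-1)"
      using expo2[OF c0 c1[folded y_def] y12[folded y_def w_def]] by (simp add: w_def)
    have "norm (f n) = exp (- (pi * (y*(of_int m)^2 + 2*Im (\<tau>$1$2)*(of_int m)*(of_int k + 1/2) + w*(of_int k + 1/2)^2 - w/4)))"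
      unfolding nf m_def k_def by (simp add: exp_add[symmetric] algebra_simps)
    also have "\<dots> \<le> exp (- (pi * (y/2 * of_int (if m = 0 then 0 else 2*\<bar>m\<bar> - 1) + w * of_int (if k \<ge> 0 then k else -k-1))))"
      using mult_left_mono[OF ex, of pi] by simp
    also have "\<dots> = \<phi> m * \<psi> k"
      unfolding \<phi>_def \<psi>_def phi1_eq phi2_eq x_def z_def by (simp add: exp_add[symmetric] algebra_simps)
    finally show ?thesis by (simp add: m_def k_def)
  qed
  define n0 :: "int^2" where "n0 = 0"
  define n1 :: "int^2" where "n1 = (\<chi> i. if i = 1 then 0 else -1)"
  have n01: "n0 \<noteq> n1" unfolding n0_def n1_def by (auto simp: vec_eq_iff intro: exI[of _ "2::2"])
  have feq: "f n0 = f n1" unfolding f_def tterm_def n0_def n1_def a_def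
    using b2 by (simp add: Let_def sum_2 algebra_simps)
  have fn: "norm (f n0) = 1" unfolding nf n0_def by (simp add: exp_add[symmetric] power2_eq_square)
  have m0: "\<phi> (n0$1) * \<psi> (n0$2) = 1" unfolding \<phi>_def \<psi>_def phi1_eq phi2_eq n0_def by simp
  have m1: "\<phi> (n1$1) * \<psi> (n1$2) = 1" unfolding \<phi>_def \<psi>_def phi1_eq phi2_eq n1_def by simp
  have s0: "0 < s" unfolding s_def by simp
  have s1: "s \<le> 213/1000" unfolding s_def x_def y_def using s_bound[OF y1] by simp
  have r0: "0 < r" unfolding r_def by simp
  have r1: "r \<le> 1/50" unfolding r_def z_def w_def using rho2_bound[OF y2] by simp
  have e2: "exp (-(2*x)) = s * s" unfolding s_def by (simp add: exp_add[symmetric])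
  have ss: "s * s \<le> (213/1000) * (213/1000)" by (rule mult_mono) (use s0 s1 in auto)
  have Phi: "(1 + s / (1 - exp (-(2*x)))) + s / (1 - exp (-(2*x))) \<le> 29/20"
  proof -
    have d: "0 < 1 - s * s" using ss by simp
    have "2 * s \<le> 9/20 * (1 - s * s)" using s1 ss by simp
    then have "2 * s / (1 - s * s) \<le> 9/20" using d by (simp add: divide_le_eq)
    then show ?thesis unfolding e2 by (simp add: add_divide_distrib[symmetric])
  qed
  have Psi: "1 / (1 - r) + 1 / (1 - r) \<le> 100/49"
  proof -
    have "2 \<le> 100/49 * (1 - r)" using r1 by simp
    then have "2 / (1 - r) \<le> 100/49" using r1 by (simp add: divide_le_eq)
    then show ?thesis by simp
  qed
  have tot: "((1 + s / (1 - exp (-(2*x)))) + s / (1 - exp (-(2*x)))) * (1 / (1 - r) + 1 / (1 - r)) \<le> 3"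
  proof -
    have "((1 + s / (1 - exp (-(2*x)))) + s / (1 - exp (-(2*x)))) * (1 / (1 - r) + 1 / (1 - r)) \<le> 29/20 * (100/49)"
      by (rule mult_mono[OF Phi Psi]) (use r1 in auto)
    then show ?thesis by (rule order_trans) simp
  qed
  have "1 \<le> norm (infsum f UNIV)"
    by (rule abstract_bound[OF hp hq p0 q0 fb n01 feq fn m0 m1 tot])
  then show ?thesis using lhs unfolding a_def by simp
qed

lemma F2_facts:
  assumes "\<tau> \<in> F2"
  shows "\<tau>$2$1 = \<tau>$1$2" "0 < Im (\<tau>$1$1)" "Im (\<tau>$1$1) \<le> Im (\<tau>$2$2)"
    "2 * Im (\<tau>$1$2) \<le> Im (\<tau>$1$1)" "0 \<le> Im (\<tau>$1$2)"
proof -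
  have H: "\<tau> \<in> siegel_H2" using assms by (simp add: F2_def)
  then have "transpose \<tau> = \<tau>" by (simp add: siegel_H2_def)
  then have "transpose \<tau> $ 2 $ 1 = \<tau> $ 2 $ 1" by simp
  then show "\<tau>$2$1 = \<tau>$1$2" by (simp add: transpose_def)
  have "\<forall>x::real^2. x \<noteq> 0 \<longrightarrow> x \<bullet> (Im_mat \<tau> *v x) > 0" using H by (simp add: siegel_H2_def)
  then have "axis 1 1 \<bullet> (Im_mat \<tau> *v axis 1 (1::real)) > 0" by (simp add: axis_eq_0_iff)
  then show "0 < Im (\<tau>$1$1)"
    by (simp add: inner_vec_def sum_2 matrix_vector_mult_def Im_mat_def axis_def)
  show "Im (\<tau>$1$1) \<le> Im (\<tau>$2$2)" "2 * Im (\<tau>$1$2) \<le> Im (\<tau>$1$1)" "0 \<le> Im (\<tau>$1$2)"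
    using assms by (simp_all add: F2_def)
qed

lemma part1:
  assumes "\<tau> \<in> F2" "b$1 = 0"
  shows "cmod (theta_char (vec2 (1/2) 0) b 0 \<tau>) * exp (pi * (vec2 (1/2) 0 \<bullet> (Im_mat \<tau> *v vec2 (1/2) 0)))
      \<ge> theta_lower_bound (Im (\<tau> $ 1 $ 1)) (Im (\<tau> $ 2 $ 2))"
proof (cases "Im (\<tau>$1$1) \<le> 3/2")
  case True
  have "theta_lower_bound (Im (\<tau> $ 1 $ 1)) (Im (\<tau> $ 2 $ 2)) \<le> 0"
    by (rule tlb_le0_a) (use F2_facts[OF assms(1)] True in auto)
  then show ?thesis by (smt (verit) mult_nonneg_nonneg norm_ge_zero exp_ge_zero)
next
  case False
  have "1 \<le> cmod (theta_char (vec2 (1/2) 0) b 0 \<tau>) * exp (pi * (vec2 (1/2) 0 \<bullet> (Im_mat \<tau> *v vec2 (1/2) 0)))"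
    by (rule case1) (use F2_facts[OF assms(1)] False assms(2) in auto)
  moreover have "theta_lower_bound (Im (\<tau> $ 1 $ 1)) (Im (\<tau> $ 2 $ 2)) \<le> 1"
    by (rule tlb_le1) (use F2_facts[OF assms(1)] in auto)
  ultimately show ?thesis by linarith
qed

lemma part3:
  assumes "\<tau> \<in> F2" "b$2 = 0"
  shows "cmod (theta_char (vec2 0 (1/2)) b 0 \<tau>) * exp (pi * (vec2 0 (1/2) \<bullet> (Im_mat \<tau> *v vec2 0 (1/2))))
      \<ge> theta_lower_bound (Im (\<tau> $ 2 $ 2)) (Im (\<tau> $ 1 $ 1))"
proof -
  note ff = F2_facts[OF assms(1)]
  show ?thesis
  proof (cases "Im (\<tau>$2$2) \<le> 3/2 \<or> Im (\<tau>$1$1) \<le> 1")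
    case True
    have "theta_lower_bound (Im (\<tau> $ 2 $ 2)) (Im (\<tau> $ 1 $ 1)) \<le> 0"
    proof (cases "Im (\<tau>$2$2) \<le> 3/2")
      case True
      then show ?thesis by (intro tlb_le0_a) (use ff in auto)
    next
      case False
      then have "Im (\<tau>$1$1) \<le> 1" using \<open>Im (\<tau>$2$2) \<le> 3/2 \<or> Im (\<tau>$1$1) \<le> 1\<close> by auto
      then show ?thesis by (intro tlb_le0_b) (use ff in auto)
    qed
    then show ?thesis by (smt (verit) mult_nonneg_nonneg norm_ge_zero exp_ge_zero)
  next
    case False
    have "1 \<le> cmod (theta_char (vec2 0 (1/2)) b 0 \<tau>) * exp (pi * (vec2 0 (1/2) \<bullet> (Im_mat \<tau> *v vec2 0 (1/2))))"
      by (rule case2) (use ff False assms(2) in auto)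
    moreover have "theta_lower_bound (Im (\<tau> $ 2 $ 2)) (Im (\<tau> $ 1 $ 1)) \<le> 1"
      by (rule tlb_le1) (use ff in auto)
    ultimately show ?thesis by linarith
  qed
qed

theorem mainTheorem14:
  fixes \<tau> :: "complex^2^2"
  assumes "\<tau> \<in> F2"
  shows "(\<forall>(a, b) \<in> {(vec2 (1/2) 0, vec2 0 0), (vec2 (1/2) 0, vec2 0 (1/2))}.
            cmod (theta_char a b 0 \<tau>) * exp (pi * (a \<bullet> (Im_mat \<tau> *v a)))
              \<ge> theta_lower_bound (Im (\<tau> $ 1 $ 1)) (Im (\<tau> $ 2 $ 2)))
       \<and> (Im (\<tau> $ 1 $ 1) \<ge> 4 \<longrightarrow> theta_lower_bound (Im (\<tau> $ 1 $ 1)) (Im (\<tau> $ 2 $ 2)) > 0)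
       \<and> (\<forall>(a, b) \<in> {(vec2 0 (1/2), vec2 0 0), (vec2 0 (1/2), vec2 (1/2) 0)}.
            cmod (theta_char a b 0 \<tau>) * exp (pi * (a \<bullet> (Im_mat \<tau> *v a)))
              \<ge> theta_lower_bound (Im (\<tau> $ 2 $ 2)) (Im (\<tau> $ 1 $ 1)))"
proof (intro conjI impI)
  show "\<forall>(a, b) \<in> {(vec2 (1/2) 0, vec2 0 0), (vec2 (1/2) 0, vec2 0 (1/2))}.
            cmod (theta_char a b 0 \<tau>) * exp (pi * (a \<bullet> (Im_mat \<tau> *v a)))
              \<ge> theta_lower_bound (Im (\<tau> $ 1 $ 1)) (Im (\<tau> $ 2 $ 2))"
    using part1[OF assms, of "vec2 0 0"] part1[OF assms, of "vec2 0 (1/2)"] by auto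
  show "Im (\<tau> $ 1 $ 1) \<ge> 4 \<Longrightarrow> theta_lower_bound (Im (\<tau> $ 1 $ 1)) (Im (\<tau> $ 2 $ 2)) > 0"
    using tlb_pos F2_facts[OF assms] by auto
  show "\<forall>(a, b) \<in> {(vec2 0 (1/2), vec2 0 0), (vec2 0 (1/2), vec2 (1/2) 0)}.
            cmod (theta_char a b 0 \<tau>) * exp (pi * (a \<bullet> (Im_mat \<tau> *v a)))
              \<ge> theta_lower_bound (Im (\<tau> $ 2 $ 2)) (Im (\<tau> $ 1 $ 1))"
    using part3[OF assms, of "vec2 0 0"] part3[OF assms, of "vec2 (1/2) 0"] by auto
qed


end
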